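(* Let $f:\mathbb R^p\to\mathbb R^p$ be a continuous function of the form $f(x)=\sum_{\ell=1}^L\mathbf 1\{x\in\mathscr X^{(\ell)}\}(\phi^{(\ell)}+\Phi^{(\ell)}x)$, where $\{\mathscr X^{(\ell)}\}_{\ell=1}^L$ is a partition of $\mathbb R^p$ into convex sets, $\phi^{(\ell)}\in\mathbb R^p$ and $\Phi^{(\ell)}\in\mathbb R^{p\times p}$. Then: (1) for every $x',x''\in\mathbb R^p$ there exists $\Phi\in\operatorname{co}\{\Phi^{(\ell)}\}_{\ell=1}^L$ such that $f(x'')-f(x')=\Phi(x''-x')$; (2) if $f$ is invertible, then the sets $\mathscr Y^{(\ell)}\defeq f(\mathscr X^{(\ell)})$ partition $\mathbb R^p$ and $f^{-1}(y)=\sum_{\ell=1}^L\mathbf 1\{y\in\mathscr Y^{(\ell)}\}(\Phi^{(\ell)})^{-1}(y-\phi^{(\ell)})$. Suppose further that there exist $a\in\mathbb R^p\setminus\{0\}$ and thresholds $-\infty=\tau_0<\tau_1<\dots<\tau_L=+\infty$ with $\mathscr X^{(\ell)}=\{x\in\mathbb R^p:a^\top x\in(\tau_{\ell-1},\tau_\ell]\}$. Then: (3) if $f$ is invertible, $f^{-1}(y)=\sum_{\ell=1}^L\mathbf 1\{b^\top y\in(\nu_{\ell-1},\nu_\ell]\}(\Phi^{(\ell)})^{-1}(y-\phi^{(\ell)})$, where $b^\top\defeq a^\top(\Phi^{(1)})^{-1}$ and $\nu_\ell\defeq\frac{\det\Phi^{(\ell)}}{\det\Phi^{(1)}}\tau_\ell+a^\top(\Phi^{(1)})^{-1}\phi^{(\ell)}$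 for $\ell\in\{0,\dots,L\}$.
   Context: $\operatorname{co}$ denotes the convex hull. In parts (2)–(3), the formulas involve $(\Phi^{(\ell)})^{-1}$; the conventions $\pm\infty$ times positive scalars plus finite constants are $\pm\infty$. *)

theory Defs
  imports "HOL-Analysis.Analysis" "HOL-Library.Extended_Real"
begin

definition pw_affine ::
  "nat \<Rightarrow> (nat \<Rightarrow> (real^'p) set) \<Rightarrow> (nat \<Rightarrow> real^'p) \<Rightarrow> (nat \<Rightarrow> real^'p^'p) \<Rightarrow> real^'p \<Rightarrow> real^'p"
  where "pw_affine L X \<phi> \<Phi> x = (\<Sum>l\<in>{1..L}. of_bool (x \<in> X l) *\<^sub>R (\<phi> l + \<Phi> l *v x))"

text \<open>For l = 0 the matrix Phi^(0) does not exist; by the stated convention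
  (-infinity times a positive scalar plus a finite constant), nu_0 = -infinity.\<close>
definition nu_thr ::
  "(real^'p) \<Rightarrow> (nat \<Rightarrow> ereal) \<Rightarrow> (nat \<Rightarrow> real^'p) \<Rightarrow> (nat \<Rightarrow> real^'p^'p) \<Rightarrow> nat \<Rightarrow> ereal"
  where "nu_thr a \<tau> \<phi> \<Phi> l =
    (if l = 0 then - \<infinity>
     else ereal (det (\<Phi> l) / det (\<Phi> 1)) * \<tau> l
          + ereal ((a v* matrix_inv (\<Phi> 1)) \<bullet> \<phi> l))"

end

theory Submission
  imports Defs
begin


lemma minv: assumes "invertible (A::real^'n^'n)"
  shows "A ** matrix_inv A = mat 1" "matrix_inv A ** A = mat 1"
proof -
  have "\<exists>A'. A ** A' = mat 1 \<and> A' ** A = mat 1" using assms unfolding invertible_def by blast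
  from someI_ex[OF this] show "A ** matrix_inv A = mat 1" "matrix_inv A ** A = mat 1"
    unfolding matrix_inv_def by auto
qed

lemma minv_vec: assumes "invertible (A::real^'n^'n)"
  shows "matrix_inv A *v (A *v x) = x" "A *v (matrix_inv A *v x) = x"
  using minv[OF assms] by (simp_all add: matrix_vector_mul_assoc)

lemma det_colk:
  fixes B :: "real^'n^'n"
  assumes "\<And>i j. j \<noteq> k \<Longrightarrow> B$i$j = (if i = j then 1 else 0)"
  shows "det B = B$k$k"
proof -
  have "det B = (\<Sum>p\<in>{p. p permutes UNIV}. of_int (sign p) * (\<Prod>i\<in>UNIV. B$i$p i))"
    unfolding det_def by simp
  also have "\<dots> = (\<Sum>p\<in>{id::'n\<Rightarrow>'n}. of_int (sign p) * (\<Prod>i\<in>UNIV. B$i$p i))"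
  proof (rule sum.mono_neutral_right)
    show "finite {p. p permutes (UNIV::'n set)}" by (simp add: finite_permutations)
    show "{id} \<subseteq> {p. p permutes (UNIV::'n set)}" by (simp add: permutes_id)
    show "\<forall>p\<in>{p. p permutes UNIV} - {id}. of_int (sign p) * (\<Prod>i\<in>UNIV. B$i$p i) = 0"
    proof
      fix p assume p: "p \<in> {p. p permutes (UNIV::'n set)} - {id}"
      then obtain i where i: "p i \<noteq> i" by (metis DiffD2 eq_id_iff singletonI)
      have "\<exists>j. B$j$p j = 0"
      proof (cases "p i = k")
        case False then show ?thesis using assms[of "p i" i] i by auto
      next
        case True
        have pk: "p k \<noteq> k"
        proof
          assume "p k = k"
          then have "p k = p i" using True by simp
          then have "k = i" using p by (auto dest: permutes_inj injD)
          then show False using i True by simp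
        qed
        then show ?thesis using assms[of "p k" k] by auto
      qed
      then have "(\<Prod>i\<in>UNIV. B$i$p i) = 0" by (metis UNIV_I finite prod_zero_iff)
      then show "of_int (sign p) * (\<Prod>i\<in>UNIV. B$i$p i) = 0" by simp
    qed
  qed
  also have "\<dots> = (\<Prod>i\<in>UNIV. B$i$i)" by (simp add: sign_id)
  also have "\<dots> = B$k$k * (\<Prod>i\<in>UNIV-{k}. B$i$i)"
    by (simp add: prod.remove)
  also have "(\<Prod>i\<in>UNIV-{k}. B$i$i) = 1"
    by (rule prod.neutral) (use assms in auto)
  finally show ?thesis by simp
qed

lemma rank1_mv:
  fixes w c z :: "real^'n"
  shows "(\<chi> i j. (if i = j then 1 else 0) + w$i * c$j) *v z = z + (c \<bullet> z) *\<^sub>R w"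
proof -
  have "(\<Sum>j\<in>UNIV. ((if i = j then 1 else 0) + w$i * c$j) * z$j) = z$i + (\<Sum>j\<in>UNIV. c$j * z$j) * w$i" for i
  proof -
    have "(\<Sum>j\<in>UNIV. ((if i = j then 1 else 0) + w$i * c$j) * z$j)
        = (\<Sum>j\<in>UNIV. (if i = j then z$j else 0)) + (\<Sum>j\<in>UNIV. c$j * z$j * w$i)"
      by (subst sum.distrib[symmetric], rule sum.cong) (auto simp: algebra_simps)
    then show ?thesis by (simp add: sum_distrib_right)
  qed
  then show ?thesis by (simp add: vec_eq_iff matrix_vector_mult_def inner_vec_def)
qed

lemma det_rank1:
  fixes w a :: "real^'n"
  shows "det (\<chi> i j. (if i = j then 1 else 0) + w$i * a$j) = 1 + a \<bullet> w"
proof (cases "a = 0")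
  case True
  have "(\<chi> i j. (if i = j then 1 else 0) + w$i * a$j) = (mat 1 :: real^'n^'n)"
    using True by (simp add: vec_eq_iff mat_def)
  then show ?thesis using True by simp
next
  case False
  then obtain k where ak: "a$k \<noteq> 0" by (metis vec_eq_iff zero_index)
  define S :: "real^'n^'n" where "S = (\<chi> i j. if i = k then a$j else (if i = j then 1 else 0))"
  define C :: "real^'n^'n" where "C = (\<chi> i j. (if i = j then 1 else 0) + w$i * a$j)"
  define E :: "real^'n^'n" where "E = (\<chi> i j. (if i = j then 1 else 0) + (S *v w)$i * (axis k 1 :: real^'n)$j)"
  have dS: "det S = a$k"
  proof -
    have "det (transpose S) = transpose S $ k $ k"
      by (rule det_colk) (auto simp: transpose_def S_def)
    moreover have "det S = det (transpose S)" by simp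
    ultimately show ?thesis by (simp add: transpose_def S_def)
  qed
  have Sk: "(S *v z)$k = a \<bullet> z" for z
    by (simp add: S_def matrix_vector_mult_def inner_vec_def)
  have "S ** C = E ** S"
  proof (rule iffD2[OF matrix_eq], rule allI)
    fix z
    have "(S ** C) *v z = S *v (z + (a \<bullet> z) *\<^sub>R w)"
      by (simp add: matrix_vector_mul_assoc[symmetric] C_def rank1_mv)
    also have "\<dots> = S *v z + (a \<bullet> z) *\<^sub>R (S *v w)"
      by (simp add: matrix_vector_right_distrib vec_eq_iff matrix_vector_mult_def sum_distrib_left sum.distrib algebra_simps)
    also have "\<dots> = E *v (S *v z)"
      unfolding E_def rank1_mv by (simp add: Sk inner_axis')
    also have "\<dots> = (E ** S) *v z" by (simp add: matrix_vector_mul_assoc)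
    finally show "(S ** C) *v z = (E ** S) *v z" .
  qed
  then have "det S * det C = det E * det S" by (metis det_mul)
  then have "det C = det E" using dS ak by simp
  also have "det E = E$k$k"
    by (rule det_colk) (auto simp: E_def axis_def)
  also have "\<dots> = 1 + a \<bullet> w" by (simp add: E_def Sk axis_def)
  finally show ?thesis unfolding C_def .
qed



lemma sum_mv: "(sum h I) *v (d::real^'n) = (\<Sum>l\<in>I. h l *v d)"
  by (induction I rule: infinite_finite_induct) (simp_all add: matrix_vector_mult_add_rdistrib)

lemma part1:
  fixes f :: "real^'p \<Rightarrow> real^'p" and X :: "nat \<Rightarrow> (real^'p) set" and I :: "nat set"
  assumes fin: "finite I" and cont: "continuous_on UNIV f"
    and cover: "\<And>x. \<exists>l\<in>I. x \<in> X l" and disj: "disjoint_family_on X I"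
    and cvx: "\<And>l. l \<in> I \<Longrightarrow> convex (X l)"
    and fon: "\<And>l x. l \<in> I \<Longrightarrow> x \<in> X l \<Longrightarrow> f x = \<phi> l + \<Phi> l *v x"
  shows "\<exists>\<Psi> \<in> convex hull (\<Phi> ` I). f x'' - f x' = \<Psi> *v (x'' - x')"
proof -
  define d where "d = x'' - x'"
  define g where "g t = f (x' + t *\<^sub>R d)" for t :: real
  define T where "T l = {t::real. x' + t *\<^sub>R d \<in> X l}" for l
  have cvxT: "convex (T l)" if "l \<in> I" for l
    unfolding convex_def T_def
  proof (intro ballI allI impI, simp)
    fix s t u v :: real
    assume "x' + s *\<^sub>R d \<in> X l" "x' + t *\<^sub>R d \<in> X l" "0 \<le> u" "0 \<le> v" "u + v = 1"
    then have "u *\<^sub>R (x' + s *\<^sub>R d) + v *\<^sub>R (x' + t *\<^sub>R d) \<in> X l"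
      using cvx[OF that] unfolding convex_def by blast
    moreover have "u *\<^sub>R (x' + s *\<^sub>R d) + v *\<^sub>R (x' + t *\<^sub>R d) = x' + (u * s + v * t) *\<^sub>R d"
      using \<open>u + v = 1\<close> by (simp add: algebra_simps flip: scaleR_add_left)
    ultimately show "x' + (u * s + v * t) *\<^sub>R d \<in> X l" by simp
  qed
  have Tcover: "\<exists>l\<in>I. t \<in> T l" for t using cover unfolding T_def by blast
  have Tdisj: "l = k" if "l \<in> I" "k \<in> I" "t \<in> T l" "t \<in> T k" for l k t
    using disj that unfolding disjoint_family_on_def T_def by blast
  define S where "S = (\<Union>l\<in>I. {Inf (T l \<inter> {0..1}), Sup (T l \<inter> {0..1})})"
  have finS: "finite S" unfolding S_def using fin by auto
  define f' where "f' t = (\<Sum>l\<in>I. indicator (T l) t *\<^sub>R (\<Phi> l *v d))" for t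
  have f'_eq: "f' t = \<Phi> l *v d" if "l \<in> I" "t \<in> T l" for l t
  proof -
    have "f' t = indicator (T l) t *\<^sub>R (\<Phi> l *v d)"
      unfolding f'_def
      by (rule sum.remove[OF fin that(1), THEN trans], rule trans[OF _ add_0_right],
          rule arg_cong2[where f="(+)"], simp, rule sum.neutral)
         (use Tdisj that in \<open>auto simp: indicator_def\<close>)
    then show ?thesis using that by simp
  qed
  have deriv: "(g has_vector_derivative f' t) (at t)" if t: "t \<in> {0<..<1} - S" for t
  proof -
    obtain l where l: "l \<in> I" "t \<in> T l" using Tcover by blast
    define U where "U = T l \<inter> {0..1}"
    have tU: "t \<in> U" using l t by (auto simp: U_def)
    have bU: "bdd_below U" "bdd_above U" unfolding U_def by (auto intro!: bdd_belowI bdd_aboveI)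
    have "Inf U \<le> t" using tU bU by (simp add: cInf_lower)
    moreover have "Inf U \<noteq> t" using t l unfolding S_def U_def by auto
    ultimately have "Inf U < t" by simp
    then obtain a where a: "a \<in> U" "a < t" using cInf_less_iff[of U t] tU bU by blast
    have "t \<le> Sup U" using tU bU by (simp add: cSup_upper)
    moreover have "Sup U \<noteq> t" using t l unfolding S_def U_def by auto
    ultimately have "t < Sup U" by simp
    then obtain b where b: "b \<in> U" "t < b" using less_cSup_iff[of U t] tU bU by blast
    have sub: "{a<..<b} \<subseteq> T l"
    proof
      fix u assume "u \<in> {a<..<b}"
      moreover have "is_interval (T l)" using cvxT[OF l(1)] by (simp add: is_interval_convex_1)
      ultimately show "u \<in> T l" using a b unfolding is_interval_1 U_def by auto
    qed
    have "((\<lambda>u. (\<phi> l + \<Phi> l *v x') + u *\<^sub>R (\<Phi> l *v d)) has_vector_derivative (\<Phi> l *v d)) (at t)"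
      by (auto intro!: derivative_eq_intros)
    then have "(g has_vector_derivative (\<Phi> l *v d)) (at t)"
    proof (rule has_vector_derivative_transform_within_open)
      show "open {a<..<b}" by simp
      show "t \<in> {a<..<b}" using a b by simp
      fix u assume "u \<in> {a<..<b}"
      then have "u \<in> T l" using sub by blast
      then show "\<phi> l + \<Phi> l *v x' + u *\<^sub>R (\<Phi> l *v d) = g u"
        unfolding g_def T_def using fon[OF l(1)]
        by (simp add: matrix_vector_right_distrib matrix_scaleR_vector_ac scaleR_matrix_vector_assoc)
    qed
    then show ?thesis using f'_eq[OF l] by simp
  qed
  have contg: "continuous_on {0..1} g"
    unfolding g_def
    by (rule continuous_on_compose2[OF cont]) (auto intro!: continuous_intros)
  have ftc: "(f' has_integral (g 1 - g 0)) {0..1}"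
    by (rule fundamental_theorem_of_calculus_interior_strong[OF finS _ deriv contg]) auto
  have integr: "(indicator (T l) :: real \<Rightarrow> real) integrable_on {0..1::real}" if "l \<in> I" for l
  proof -
    have "T l \<inter> {0..1} \<in> lmeasurable"
      by (rule measurable_convex) (auto intro: convex_Int cvxT[OF that])
    then have "(\<lambda>x. 1::real) integrable_on (T l \<inter> {0..1})" by (simp add: lmeasurable_iff_integrable_on)
    then have "(\<lambda>x. if x \<in> T l then 1::real else 0) integrable_on {0..1}"
      by (simp add: integrable_restrict_Int)
    moreover have "(\<lambda>x. if x \<in> T l then 1::real else 0) = indicator (T l)"
      by (auto simp: indicator_def)
    ultimately show ?thesis by simp
  qed
  define lam where "lam l = integral {0..1} (indicator (T l) :: real \<Rightarrow> real)" for l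
  have hi: "((indicator (T l) :: real \<Rightarrow> real) has_integral lam l) {0..1}" if "l \<in> I" for l
    unfolding lam_def using integr[OF that] by (simp add: has_integral_integral)
  have "(f' has_integral (\<Sum>l\<in>I. lam l *\<^sub>R (\<Phi> l *v d))) {0..1}"
    unfolding f'_def by (rule has_integral_sum[OF fin], rule has_integral_scaleR_left, rule hi)
  then have eq: "g 1 - g 0 = (\<Sum>l\<in>I. lam l *\<^sub>R (\<Phi> l *v d))"
    using ftc has_integral_unique by blast
  have "((\<lambda>t. \<Sum>l\<in>I. indicator (T l) t) has_integral (\<Sum>l\<in>I. lam l)) {0..1::real}"
    by (rule has_integral_sum[OF fin], rule hi)
  moreover have "(\<lambda>t. \<Sum>l\<in>I. indicator (T l) t) = (\<lambda>t. 1::real)"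
  proof
    fix t
    obtain l where l: "l \<in> I" "t \<in> T l" using Tcover by blast
    have "(\<Sum>l\<in>I. indicator (T l) t) = (indicator (T l) t::real)"
      by (rule sum.remove[OF fin l(1), THEN trans], rule trans[OF _ add_0_right],
          rule arg_cong2[where f="(+)"], simp, rule sum.neutral)
         (use Tdisj l in \<open>auto simp: indicator_def\<close>)
    then show "(\<Sum>l\<in>I. indicator (T l) t) = (1::real)" using l by simp
  qed
  ultimately have "((\<lambda>t. 1::real) has_integral (\<Sum>l\<in>I. lam l)) {0..1::real}" by simp
  moreover have "((\<lambda>t. 1::real) has_integral 1) {0..1::real}"
    using has_integral_const_real[of "1::real" 0 1] by simp
  ultimately have sum1: "(\<Sum>l\<in>I. lam l) = 1" using has_integral_unique by blast
  have nonneg: "0 \<le> lam l" if "l \<in> I" for l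
    unfolding lam_def by (rule integral_nonneg[OF integr[OF that]]) (simp add: indicator_def)
  define \<Psi> where "\<Psi> = (\<Sum>l\<in>I. lam l *\<^sub>R \<Phi> l)"
  have "\<Psi> \<in> convex hull (\<Phi> ` I)"
    unfolding \<Psi>_def
    by (rule convex_sum[OF fin convex_convex_hull sum1 nonneg]) (auto intro: hull_inc)
  moreover have "f x'' - f x' = \<Psi> *v (x'' - x')"
  proof -
    have "f x'' - f x' = g 1 - g 0" by (simp add: g_def d_def)
    also have "\<dots> = \<Psi> *v d"
      unfolding eq \<Psi>_def sum_mv by (simp add: scaleR_matrix_vector_assoc)
    finally show ?thesis by (simp add: d_def)
  qed
  ultimately show ?thesis by blast
qed



lemma mv_scale: "(A::real^'n^'m) *v (k *\<^sub>R v) = k *\<^sub>R (A *v v)"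
  by (simp add: matrix_scaleR_vector_ac scaleR_matrix_vector_assoc)

lemma det_update:
  fixes A B :: "real^'n^'n" and a c :: "real^'n"
  assumes inv: "invertible A" and B: "\<And>z. B *v z = A *v z + (a \<bullet> z) *\<^sub>R c"
  shows "det B = det A * (1 + a \<bullet> (matrix_inv A *v c))"
    and "a \<bullet> (matrix_inv A *v (B *v z)) = (1 + a \<bullet> (matrix_inv A *v c)) * (a \<bullet> z)"
proof -
  define w where "w = matrix_inv A *v c"
  define C :: "real^'n^'n" where "C = (\<chi> i j. (if i = j then 1 else 0) + w$i * a$j)"
  have "A ** C = B"
  proof (rule iffD2[OF matrix_eq], rule allI)
    fix z
    have "(A ** C) *v z = A *v (z + (a \<bullet> z) *\<^sub>R w)"
      by (simp add: matrix_vector_mul_assoc[symmetric] C_def rank1_mv)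
    also have "\<dots> = A *v z + (a \<bullet> z) *\<^sub>R c"
      by (simp add: matrix_vector_right_distrib mv_scale
          w_def minv_vec[OF inv])
    finally show "(A ** C) *v z = B *v z" using B by simp
  qed
  then have "det B = det A * det C" by (metis det_mul)
  then show "det B = det A * (1 + a \<bullet> (matrix_inv A *v c))"
    unfolding C_def det_rank1 w_def .
  have "matrix_inv A *v (B *v z) = z + (a \<bullet> z) *\<^sub>R w"
    by (simp add: B matrix_vector_right_distrib mv_scale
          w_def minv_vec[OF inv])
  then show "a \<bullet> (matrix_inv A *v (B *v z)) = (1 + a \<bullet> (matrix_inv A *v c)) * (a \<bullet> z)"
    by (simp add: w_def inner_add_right algebra_simps)
qed

lemma sum_single:
  assumes "finite I" "l \<in> I" "\<And>k. k \<in> I \<Longrightarrow> k \<noteq> l \<Longrightarrow> \<not> P k"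
  shows "(\<Sum>k\<in>I. of_bool (P k) *\<^sub>R (v k :: 'a::real_vector)) = of_bool (P l) *\<^sub>R v l"
  by (rule sum.remove[OF assms(1,2), THEN trans], rule trans[OF _ add_0_right],
      rule arg_cong2[where f="(+)"], simp, rule sum.neutral) (use assms in auto)

lemma E1: "r > 0 \<Longrightarrow> (ereal r * e + ereal c < ereal v) \<longleftrightarrow> (e < ereal ((v - c) / r))"
  by (cases e) (auto simp: field_simps)

lemma E2: "r > 0 \<Longrightarrow> (ereal v \<le> ereal r * e + ereal c) \<longleftrightarrow> (ereal ((v - c) / r) \<le> e)"
  by (cases e) (auto simp: field_simps)

lemma E3: "r > 0 \<Longrightarrow> e1 < e2 \<Longrightarrow> ereal r * e1 + ereal c < ereal r * e2 + ereal c"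
  by (cases e1; cases e2) auto



lemma part3:
  fixes f :: "real^'p \<Rightarrow> real^'p" and X :: "nat \<Rightarrow> (real^'p) set"
    and \<phi> :: "nat \<Rightarrow> real^'p" and \<Phi> :: "nat \<Rightarrow> real^'p^'p"
    and a :: "real^'p" and \<tau> :: "nat \<Rightarrow> ereal"
  assumes cont: "continuous_on UNIV f"
    and fon: "\<And>l x. l \<in> {1..L} \<Longrightarrow> x \<in> X l \<Longrightarrow> f x = \<phi> l + \<Phi> l *v x"
    and L1: "1 \<le> L"
    and a0: "a \<noteq> 0" and t0: "\<tau> 0 = - \<infinity>" and tL: "\<tau> L = \<infinity>" and mono: "\<And>l. l < L \<Longrightarrow> \<tau> l < \<tau> (Suc l)"
    and Xdef: "\<And>l. l \<in> {1..L} \<Longrightarrow> X l = {x. \<tau> (l - 1) < ereal (a \<bullet> x) \<and> ereal (a \<bullet> x) \<le> \<tau> l}"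
    and bij: "bij f" and cover: "\<And>x. \<exists>l\<in>{1..L}. x \<in> X l"
  shows "inv f y = (\<Sum>l\<in>{1..L}.
                 of_bool (nu_thr a \<tau> \<phi> \<Phi> (l - 1) < ereal ((a v* matrix_inv (\<Phi> 1)) \<bullet> y)
                          \<and> ereal ((a v* matrix_inv (\<Phi> 1)) \<bullet> y) \<le> nu_thr a \<tau> \<phi> \<Phi> l)
                 *\<^sub>R (matrix_inv (\<Phi> l) *v (y - \<phi> l)))"
proof -
  have injf: "inj f" using bij bij_is_inj by blast
  have aa: "a \<bullet> a > 0" using a0 by simp
  have memX: "x \<in> X l" if "l \<in> {1..L}" "\<tau> (l - 1) < ereal (a \<bullet> x)" "ereal (a \<bullet> x) \<le> \<tau> l" for l x
    using Xdef[OF that(1)] that by auto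
  have inX: "\<tau> (l - 1) < ereal (a \<bullet> x) \<and> ereal (a \<bullet> x) \<le> \<tau> l" if "l \<in> {1..L}" "x \<in> X l" for l x
    using Xdef[OF that(1)] that by auto
  have tlt: "\<tau> m < \<tau> n" if "m < n" "n \<le> L" for m n
    using that
  proof (induction n)
    case 0 then show ?case by simp
  next
    case (Suc n)
    then show ?case using mono[of n] by (cases "m = n") auto
  qed
  define t where "t l = real_of_ereal (\<tau> l)" for l
  have tfin: "\<tau> l = ereal (t l)" if "0 < l" "l < L" for l
  proof -
    have "- \<infinity> < \<tau> l" using tlt[of 0 l] that t0 by simp
    moreover have "\<tau> l < \<infinity>" using tlt[of l L] that tL by simp
    ultimately show ?thesis unfolding t_def by (cases "\<tau> l") auto
  qed
  have memX2: "x \<in> X l" if "l \<in> {1..L}" "\<tau> (l - 1) < ereal p" "ereal p < \<tau> l" "a \<bullet> x = p" for l x p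
    using memX[OF that(1)] that by auto
  have invt: "invertible (\<Phi> l)" if l: "l \<in> {1..L}" for l
  proof -
    have "\<tau> (l - 1) < \<tau> l" using l mono[of "l - 1"] by auto
    then obtain p where p: "\<tau> (l - 1) < ereal p" "ereal p < \<tau> l" using ereal_dense2 by blast
    then obtain q where q: "ereal p < ereal q" "ereal q < \<tau> l" using ereal_dense2 by blast
    have pq: "p < q" using q by simp
    have "inj ((*v) (\<Phi> l))"
    proof (rule injI)
      fix u w assume uw: "\<Phi> l *v u = \<Phi> l *v w"
      define v where "v = u - w"
      have Pv: "\<Phi> l *v v = 0" using uw by (simp add: v_def matrix_vector_mult_diff_distrib)
      define z0 where "z0 = (((p + q) / 2) / (a \<bullet> a)) *\<^sub>R a"
      define s where "s = (q - p) / (2 * (\<bar>a \<bullet> v\<bar> + 1))"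
      have s0: "s > 0" using pq by (simp add: s_def add_pos_nonneg)
      have az0: "a \<bullet> z0 = (p + q) / 2" using aa by (simp add: z0_def)
      have sb: "\<bar>s * (a \<bullet> v)\<bar> < (q - p) / 2"
      proof -
        have "\<bar>s * (a \<bullet> v)\<bar> = s * \<bar>a \<bullet> v\<bar>" using s0 by (simp add: abs_mult)
        also have "\<dots> < s * (\<bar>a \<bullet> v\<bar> + 1)" using s0 by simp
        also have "\<dots> = (q - p) / 2" unfolding s_def by (simp add: field_simps add_pos_nonneg)
        finally show ?thesis .
      qed
      have z0X: "z0 \<in> X l"
      proof (rule memX2[OF l, of "(p+q)/2"])
        have "ereal p \<le> ereal ((p+q)/2)" "ereal ((p+q)/2) \<le> ereal q" using pq by auto
        then show "\<tau> (l - 1) < ereal ((p + q) / 2)" "ereal ((p + q) / 2) < \<tau> l"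
          using p q by (meson order.strict_trans1 order.strict_trans2)+
      qed (use az0 in auto)
      have z1X: "z0 + s *\<^sub>R v \<in> X l"
      proof (rule memX2[OF l, of "(p+q)/2 + s * (a \<bullet> v)"])
        have "ereal p \<le> ereal ((p + q) / 2 + s * (a \<bullet> v))" "ereal ((p + q) / 2 + s * (a \<bullet> v)) \<le> ereal q"
          using sb by (auto simp: abs_less_iff field_simps)
        then show "\<tau> (l - 1) < ereal ((p + q) / 2 + s * (a \<bullet> v))" "ereal ((p + q) / 2 + s * (a \<bullet> v)) < \<tau> l"
          using p q by (meson order.strict_trans1 order.strict_trans2)+
        show "a \<bullet> (z0 + s *\<^sub>R v) = (p + q) / 2 + s * (a \<bullet> v)" by (simp add: az0 inner_add_right)
      qed
      have "f (z0 + s *\<^sub>R v) = f z0"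
        using fon[OF l z0X] fon[OF l z1X] Pv
        by (simp add: matrix_vector_right_distrib mv_scale)
      then have "z0 + s *\<^sub>R v = z0" using injf by (simp add: inj_eq)
      then have "v = 0" using s0 by simp
      then show "u = w" by (simp add: v_def)
    qed
    then show ?thesis
      by (metis det_nz_iff_inj invertible_det_nz matrix_of_matrix_vector_mul matrix_vector_mul_linear)
  qed
  have bnd: "\<phi> l + \<Phi> l *v x = \<phi> (Suc l) + \<Phi> (Suc l) *v x" if lL: "1 \<le> l" "l < L" and ax: "a \<bullet> x = t l" for l x
  proof -
    have l: "l \<in> {1..L}" "Suc l \<in> {1..L}" using lL by auto
    have tl: "\<tau> l = ereal (t l)" using tfin lL by simp
    have xX: "x \<in> X l"
      by (rule memX[OF l(1)]) (use tlt[of "l - 1" l] lL tl ax in auto)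
    obtain q where q: "\<tau> l < ereal q" "ereal q < \<tau> (Suc l)" using mono[OF lL(2)] ereal_dense2 by blast
    have tq: "t l < q" using q tl by simp
    define h where "h z = \<phi> (Suc l) + \<Phi> (Suc l) *v z" for z
    have sub: "X (Suc l) \<subseteq> {z. f z = h z}" using fon[OF l(2)] h_def by auto
    have clo: "closed {z. f z = h z}"
      by (rule closed_Collect_eq[OF cont]) (auto simp: h_def intro!: continuous_intros)
    have "x \<in> closure (X (Suc l))"
      unfolding closure_approachable
    proof (intro allI impI)
      fix e :: real assume e: "e > 0"
      define s where "s = min (e / (2 * norm a)) ((q - t l) / (a \<bullet> a))"
      have s0: "s > 0" using e a0 tq aa by (simp add: s_def)
      have "s \<le> (q - t l) / (a \<bullet> a)" by (simp add: s_def)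
      then have s1: "s * (a \<bullet> a) \<le> q - t l" using aa by (simp add: pos_le_divide_eq)
      have s2: "s * norm a < e"
      proof -
        have "s \<le> e / (2 * norm a)" by (simp add: s_def)
        then have "s * norm a \<le> e / (2 * norm a) * norm a" by (rule mult_right_mono) simp
        also have "\<dots> = e / 2" using a0 by simp
        finally show ?thesis using e by simp
      qed
      have "x + s *\<^sub>R a \<in> X (Suc l)"
      proof (rule memX[OF l(2)])
        show "\<tau> (Suc l - 1) < ereal (a \<bullet> (x + s *\<^sub>R a))"
          using tl ax s0 aa by (simp add: inner_add_right)
        have "a \<bullet> (x + s *\<^sub>R a) = t l + s * (a \<bullet> a)" by (simp add: inner_add_right ax)
        then have "ereal (a \<bullet> (x + s *\<^sub>R a)) \<le> ereal q" using s1 by simp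
        then show "ereal (a \<bullet> (x + s *\<^sub>R a)) \<le> \<tau> (Suc l)" using q(2) by (meson order.trans order.strict_implies_order)
      qed
      moreover have "dist (x + s *\<^sub>R a) x < e" using s0 s2 by (simp add: dist_norm)
      ultimately show "\<exists>y\<in>X (Suc l). dist y x < e" by blast
    qed
    then have "f x = h x" using closure_minimal[OF sub clo] by blast
    then show ?thesis using fon[OF l(1) xX] h_def by simp
  qed
  have rk: "\<exists>c. \<forall>z. \<Phi> (Suc l) *v z = \<Phi> l *v z + (a \<bullet> z) *\<^sub>R c" if lL: "1 \<le> l" "l < L" for l
  proof -
    define x0 where "x0 = (t l / (a \<bullet> a)) *\<^sub>R a"
    have ax0: "a \<bullet> x0 = t l" using aa by (simp add: x0_def)
    define Dm where "Dm = \<Phi> (Suc l) - \<Phi> l"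
    have D0: "Dm *v h = 0" if ah: "a \<bullet> h = 0" for h
    proof -
      have e1: "\<phi> l + \<Phi> l *v x0 = \<phi> (Suc l) + \<Phi> (Suc l) *v x0" by (rule bnd[OF lL ax0])
      have e2: "\<phi> l + \<Phi> l *v (x0 + h) = \<phi> (Suc l) + \<Phi> (Suc l) *v (x0 + h)"
        by (rule bnd[OF lL]) (simp add: inner_add_right ax0 ah)
      have "(\<phi> l + \<Phi> l *v x0) + \<Phi> l *v h = (\<phi> (Suc l) + \<Phi> (Suc l) *v x0) + \<Phi> (Suc l) *v h"
        using e2 by (simp add: matrix_vector_right_distrib add.assoc)
      then have "\<Phi> l *v h = \<Phi> (Suc l) *v h" unfolding e1 by simp
      then show ?thesis by (simp add: Dm_def matrix_vector_mult_diff_rdistrib)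
    qed
    define c where "c = (1 / (a \<bullet> a)) *\<^sub>R (Dm *v a)"
    have "\<Phi> (Suc l) *v z = \<Phi> l *v z + (a \<bullet> z) *\<^sub>R c" for z
    proof -
      define zp where "zp = z - ((a \<bullet> z) / (a \<bullet> a)) *\<^sub>R a"
      have "a \<bullet> zp = 0" using aa by (simp add: zp_def inner_diff_right)
      then have "Dm *v zp = 0" by (rule D0)
      moreover have "z = zp + ((a \<bullet> z) / (a \<bullet> a)) *\<^sub>R a" by (simp add: zp_def)
      ultimately have "Dm *v z = ((a \<bullet> z) / (a \<bullet> a)) *\<^sub>R (Dm *v a)"
        by (metis add_0 matrix_vector_right_distrib mv_scale)
      then have "Dm *v z = (a \<bullet> z) *\<^sub>R c" by (simp add: c_def)
      then show ?thesis by (simp add: Dm_def matrix_vector_mult_diff_rdistrib algebra_simps)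
    qed
    then show ?thesis by blast
  qed
  have glob: "l \<in> {1..L} \<longrightarrow> (\<exists>c. \<forall>z. \<Phi> l *v z = \<Phi> 1 *v z + (a \<bullet> z) *\<^sub>R c)" for l
  proof (induction l)
    case 0 then show ?case by simp
  next
    case (Suc l)
    show ?case
    proof (cases "l = 0")
      case True then show ?thesis by (intro impI exI[of _ 0]) simp
    next
      case False
      show ?thesis
      proof
        assume "Suc l \<in> {1..L}"
        then have lL: "1 \<le> l" "l < L" using False by auto
        then obtain c1 where c1: "\<forall>z. \<Phi> l *v z = \<Phi> 1 *v z + (a \<bullet> z) *\<^sub>R c1" using Suc.IH by auto
        obtain c2 where c2: "\<forall>z. \<Phi> (Suc l) *v z = \<Phi> l *v z + (a \<bullet> z) *\<^sub>R c2" using rk[OF lL] by auto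
        have "\<forall>z. \<Phi> (Suc l) *v z = \<Phi> 1 *v z + (a \<bullet> z) *\<^sub>R (c1 + c2)"
          using c1 c2 by (simp add: scaleR_add_right add.assoc)
        then show "\<exists>c. \<forall>z. \<Phi> (Suc l) *v z = \<Phi> 1 *v z + (a \<bullet> z) *\<^sub>R c" by blast
      qed
    qed
  qed
  have inv1: "invertible (\<Phi> 1)" using invt L1 by simp
  have d1: "det (\<Phi> 1) \<noteq> 0" using inv1 invertible_det_nz by blast
  define \<rho> where "\<rho> l = det (\<Phi> l) / det (\<Phi> 1)" for l
  define M1 where "M1 = matrix_inv (\<Phi> 1)"
  have K: "a \<bullet> (M1 *v (\<Phi> l *v z)) = \<rho> l * (a \<bullet> z)" if l: "l \<in> {1..L}" for l z
  proof -
    obtain c where c: "\<And>z. \<Phi> l *v z = \<Phi> 1 *v z + (a \<bullet> z) *\<^sub>R c" using glob[of l] l by blast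
    have "\<rho> l = 1 + a \<bullet> (matrix_inv (\<Phi> 1) *v c)"
      using det_update(1)[OF inv1 c] d1 by (simp add: \<rho>_def)
    then show ?thesis using det_update(2)[OF inv1 c] by (simp add: M1_def)
  qed
  have sig: "det (\<Phi> (Suc l)) / det (\<Phi> l) > 0" if lL: "1 \<le> l" "l < L" for l
  proof -
    have l: "l \<in> {1..L}" "Suc l \<in> {1..L}" using lL by auto
    obtain c where c: "\<And>z. \<Phi> (Suc l) *v z = \<Phi> l *v z + (a \<bullet> z) *\<^sub>R c" using rk[OF lL] by blast
    define \<sigma> where "\<sigma> = 1 + a \<bullet> (matrix_inv (\<Phi> l) *v c)"
    have invl: "invertible (\<Phi> l)" using invt l by simp
    have dl: "det (\<Phi> l) \<noteq> 0" "det (\<Phi> (Suc l)) \<noteq> 0" using invt l invertible_det_nz by blast+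
    have dS: "det (\<Phi> (Suc l)) = det (\<Phi> l) * \<sigma>" using det_update(1)[OF invl c] by (simp add: \<sigma>_def)
    have KS: "a \<bullet> (matrix_inv (\<Phi> l) *v (\<Phi> (Suc l) *v z)) = \<sigma> * (a \<bullet> z)" for z
      using det_update(2)[OF invl c] by (simp add: \<sigma>_def)
    have "\<sigma> \<noteq> 0" using dS dl by auto
    moreover have "\<not> \<sigma> < 0"
    proof
      assume sn: "\<sigma> < 0"
      have tl: "\<tau> l = ereal (t l)" using tfin lL by simp
      define x0 where "x0 = (t l / (a \<bullet> a)) *\<^sub>R a"
      have ax0: "a \<bullet> x0 = t l" using aa by (simp add: x0_def)
      obtain q where q: "\<tau> l < ereal q" "ereal q < \<tau> (Suc l)" using mono[OF lL(2)] ereal_dense2 by blast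
      have "\<tau> (l - 1) < \<tau> l" using mono[of "l - 1"] lL by simp
      then obtain p where p: "\<tau> (l - 1) < ereal p" "ereal p < \<tau> l" using ereal_dense2 by blast
      have tq: "t l < q" "p < t l" using q p tl by auto
      define s where "s = min ((q - t l) / (a \<bullet> a)) ((t l - p) / ((- \<sigma>) * (a \<bullet> a)))"
      have "(t l - p) / ((- \<sigma>) * (a \<bullet> a)) > 0" using tq aa sn by (intro divide_pos_pos) (auto simp: mult_neg_pos)
      moreover have "(q - t l) / (a \<bullet> a) > 0" using tq aa by simp
      ultimately have s0: "s > 0" by (simp add: s_def)
      have "s \<le> (q - t l) / (a \<bullet> a)" by (simp add: s_def)
      then have s1: "s * (a \<bullet> a) \<le> q - t l" using aa by (simp add: pos_le_divide_eq)
      have "s \<le> (t l - p) / ((- \<sigma>) * (a \<bullet> a))" by (simp add: s_def)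
      moreover have "0 < (- \<sigma>) * (a \<bullet> a)" using aa sn by (simp add: mult_neg_pos)
      ultimately have s2: "s * ((- \<sigma>) * (a \<bullet> a)) \<le> t l - p" by (metis pos_le_divide_eq)
      define P where "P = x0 + s *\<^sub>R a"
      define Q where "Q = x0 + s *\<^sub>R (matrix_inv (\<Phi> l) *v (\<Phi> (Suc l) *v a))"
      have aP: "a \<bullet> P = t l + s * (a \<bullet> a)" by (simp add: P_def inner_add_right ax0)
      have aQ: "a \<bullet> Q = t l + s * (\<sigma> * (a \<bullet> a))" by (simp add: Q_def inner_add_right ax0 KS)
      have PX: "P \<in> X (Suc l)"
      proof (rule memX[OF l(2)])
        show "\<tau> (Suc l - 1) < ereal (a \<bullet> P)" using tl aP s0 aa by simp
        have "ereal (a \<bullet> P) \<le> ereal q" using aP s1 by simp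
        then show "ereal (a \<bullet> P) \<le> \<tau> (Suc l)" using q(2) by (meson order.trans order.strict_implies_order)
      qed
      have QX: "Q \<in> X l"
      proof (rule memX[OF l(1)])
        have "ereal p \<le> ereal (a \<bullet> Q)" using aQ s2 by (simp add: algebra_simps)
        then show "\<tau> (l - 1) < ereal (a \<bullet> Q)" using p(1) by (meson order.strict_trans2)
        have "s * (\<sigma> * (a \<bullet> a)) \<le> 0" using s0 sn aa by (simp add: mult_pos_neg mult_le_0_iff)
        then show "ereal (a \<bullet> Q) \<le> \<tau> l" using aQ tl by simp
      qed
      have "f P = \<phi> (Suc l) + \<Phi> (Suc l) *v x0 + s *\<^sub>R (\<Phi> (Suc l) *v a)"
        using fon[OF l(2) PX] by (simp add: P_def matrix_vector_right_distrib mv_scale add.assoc)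
      also have "\<dots> = \<phi> l + \<Phi> l *v x0 + s *\<^sub>R (\<Phi> (Suc l) *v a)" using bnd[OF lL ax0] by simp
      also have "\<dots> = f Q"
        using fon[OF l(1) QX] by (simp add: Q_def matrix_vector_right_distrib mv_scale add.assoc minv_vec[OF invl])
      finally have "P = Q" using injf by (simp add: inj_eq)
      then have "t l + s * (a \<bullet> a) = t l + s * (\<sigma> * (a \<bullet> a))" using aP aQ by simp
      moreover have "s * (\<sigma> * (a \<bullet> a)) < 0" using s0 sn aa by (intro mult_pos_neg mult_neg_pos) auto
      moreover have "s * (a \<bullet> a) > 0" using s0 aa by simp
      ultimately show False by linarith
    qed
    ultimately have "\<sigma> > 0" by simp
    then show ?thesis using dS dl by simp
  qed
  have rpos: "l \<in> {1..L} \<longrightarrow> \<rho> l > 0" for l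
  proof (induction l)
    case 0 then show ?case by simp
  next
    case (Suc l)
    show ?case
    proof (cases "l = 0")
      case True then show ?thesis using d1 by (simp add: \<rho>_def)
    next
      case False
      show ?thesis
      proof
        assume "Suc l \<in> {1..L}"
        then have lL: "1 \<le> l" "l < L" using False by auto
        have "invertible (\<Phi> l)" using lL by (intro invt) auto
        then have dl: "det (\<Phi> l) \<noteq> 0" by (simp add: invertible_det_nz)
        have eq: "\<rho> (Suc l) = (det (\<Phi> (Suc l)) / det (\<Phi> l)) * \<rho> l" using dl by (simp add: \<rho>_def)
        have "\<rho> l > 0" using Suc.IH lL by auto
        then show "\<rho> (Suc l) > 0" unfolding eq by (rule mult_pos_pos[OF sig[OF lL]])
      qed
    qed
  qed
  define \<beta> where "\<beta> l = a \<bullet> (M1 *v \<phi> l)" for l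
  have cont_rel: "\<beta> (Suc l) + \<rho> (Suc l) * t l = \<beta> l + \<rho> l * t l" if lL: "1 \<le> l" "l < L" for l
  proof -
    define x0 where "x0 = (t l / (a \<bullet> a)) *\<^sub>R a"
    have ax0: "a \<bullet> x0 = t l" using aa by (simp add: x0_def)
    have "a \<bullet> (M1 *v (\<phi> l + \<Phi> l *v x0)) = a \<bullet> (M1 *v (\<phi> (Suc l) + \<Phi> (Suc l) *v x0))"
      using bnd[OF lL ax0] by simp
    then show ?thesis using K[of l x0] K[of "Suc l" x0] lL ax0
      by (simp add: matrix_vector_right_distrib inner_add_right \<beta>_def)
  qed
  define \<nu> where "\<nu> = nu_thr a \<tau> \<phi> \<Phi>"
  have nu_k: "\<nu> k = ereal (\<rho> k) * \<tau> k + ereal (\<beta> k)" if "k \<ge> 1" for k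
    using that by (simp add: \<nu>_def nu_thr_def \<rho>_def \<beta>_def M1_def dot_lmul_matrix)
  have r1: "\<rho> 1 = 1" using d1 by (simp add: \<rho>_def)
  have nu_prev: "\<nu> (k - 1) = ereal (\<rho> k) * \<tau> (k - 1) + ereal (\<beta> k)" if k: "k \<in> {1..L}" for k
  proof (cases "k = 1")
    case True
    then show ?thesis using r1 t0 by (simp add: \<nu>_def nu_thr_def)
  next
    case False
    then have kk: "1 \<le> k - 1" "k - 1 < L" "Suc (k - 1) = k" using k by auto
    have tk: "\<tau> (k - 1) = ereal (t (k - 1))" using tfin kk by simp
    have "\<nu> (k - 1) = ereal (\<rho> (k - 1) * t (k - 1) + \<beta> (k - 1))" using nu_k[OF kk(1)] tk by simp
    also have "\<dots> = ereal (\<rho> k * t (k - 1) + \<beta> k)" using cont_rel[OF kk(1,2)] kk(3) by simp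
    finally show ?thesis using tk by simp
  qed
  have nu_lt: "\<nu> (k - 1) < \<nu> k" if k: "k \<in> {1..L}" for k
  proof -
    have "k - 1 < L" "Suc (k - 1) = k" using k by auto
    then have "\<tau> (k - 1) < \<tau> k" using mono[of "k - 1"] by simp
    moreover have "\<nu> k = ereal (\<rho> k) * \<tau> k + ereal (\<beta> k)" using k by (intro nu_k) auto
    ultimately show ?thesis unfolding nu_prev[OF k] using k rpos[of k] by (simp add: E3)
  qed
  have nu_mono: "\<nu> j \<le> \<nu> m" if "j \<le> m" "m \<le> L" for j m
    using that
  proof (induction m)
    case 0 then show ?case by simp
  next
    case (Suc m)
    show ?case
    proof (cases "j = Suc m")
      case True then show ?thesis by simp
    next
      case False
      then have "\<nu> j \<le> \<nu> m" using Suc by simp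
      also have "\<nu> m \<le> \<nu> (Suc m)" using nu_lt[of "Suc m"] Suc.prems by simp
      finally show ?thesis .
    qed
  qed
  define x where "x = inv f y"
  have fx: "f x = y" unfolding x_def using bij by (simp add: bij_is_surj surj_f_inv_f)
  obtain l0 where l0: "l0 \<in> {1..L}" "x \<in> X l0" using cover by blast
  have y: "y = \<phi> l0 + \<Phi> l0 *v x" using fon[OF l0] fx by simp
  define u where "u = a \<bullet> x"
  have hby: "(a v* matrix_inv (\<Phi> 1)) \<bullet> y = \<beta> l0 + \<rho> l0 * u"
    using K[OF l0(1), of x] by (simp add: dot_lmul_matrix y M1_def matrix_vector_right_distrib
        inner_add_right \<beta>_def u_def)
  have rl0: "\<rho> l0 > 0" using rpos l0 by simp
  have ux: "\<tau> (l0 - 1) < ereal u" "ereal u \<le> \<tau> l0" using inX[OF l0] u_def by auto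
  have cond0: "\<nu> (l0 - 1) < ereal (\<beta> l0 + \<rho> l0 * u) \<and> ereal (\<beta> l0 + \<rho> l0 * u) \<le> \<nu> l0"
  proof
    show "\<nu> (l0 - 1) < ereal (\<beta> l0 + \<rho> l0 * u)"
      unfolding nu_prev[OF l0(1)] E1[OF rl0] using ux rl0 by simp
    show "ereal (\<beta> l0 + \<rho> l0 * u) \<le> \<nu> l0"
      using nu_k[of l0] E2[OF rl0] l0 ux rl0 by simp
  qed
  have other: "\<not> (\<nu> (k - 1) < ereal (\<beta> l0 + \<rho> l0 * u) \<and> ereal (\<beta> l0 + \<rho> l0 * u) \<le> \<nu> k)"
    if k: "k \<in> {1..L}" "k \<noteq> l0" for k
  proof (cases "k < l0")
    case True
    then have "\<nu> k \<le> \<nu> (l0 - 1)" using nu_mono[of k "l0 - 1"] l0 by simp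
    then show ?thesis using cond0 by auto
  next
    case False
    then have "\<nu> l0 \<le> \<nu> (k - 1)" using nu_mono[of l0 "k - 1"] k by simp
    then show ?thesis using cond0 by auto
  qed
  have "(\<Sum>l\<in>{1..L}.
                 of_bool (nu_thr a \<tau> \<phi> \<Phi> (l - 1) < ereal ((a v* matrix_inv (\<Phi> 1)) \<bullet> y)
                          \<and> ereal ((a v* matrix_inv (\<Phi> 1)) \<bullet> y) \<le> nu_thr a \<tau> \<phi> \<Phi> l)
                 *\<^sub>R (matrix_inv (\<Phi> l) *v (y - \<phi> l)))
     = of_bool (\<nu> (l0 - 1) < ereal (\<beta> l0 + \<rho> l0 * u) \<and> ereal (\<beta> l0 + \<rho> l0 * u) \<le> \<nu> l0)
                 *\<^sub>R (matrix_inv (\<Phi> l0) *v (y - \<phi> l0))"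
    unfolding \<nu>_def[symmetric] hby by (rule sum_single) (use l0 other in auto)
  also have "\<dots> = x" using cond0 by (simp add: y minv_vec[OF invt[OF l0(1)]])
  finally show ?thesis unfolding x_def ..

qed


theorem lemmaE2:
  fixes L :: nat
    and X :: "nat \<Rightarrow> (real^'p) set"
    and \<phi> :: "nat \<Rightarrow> real^'p"
    and \<Phi> :: "nat \<Rightarrow> real^'p^'p"
    and f :: "real^'p \<Rightarrow> real^'p"
  assumes cont: "continuous_on UNIV f"
    and f_def: "\<And>x. f x = pw_affine L X \<phi> \<Phi> x"
    and cover: "(\<Union>l\<in>{1..L}. X l) = UNIV"
    and disj: "disjoint_family_on X {1..L}"
    and cvx: "\<And>l. l \<in> {1..L} \<Longrightarrow> convex (X l)"
  shows
    "(\<forall>x' x''. \<exists>\<Psi> \<in> convex hull (\<Phi> ` {1..L}). f x'' - f x' = \<Psi> *v (x'' - x'))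
     \<and> (bij f \<longrightarrow> (\<forall>l\<in>{1..L}. invertible (\<Phi> l)) \<longrightarrow>
          (\<Union>l\<in>{1..L}. f ` X l) = UNIV
          \<and> disjoint_family_on (\<lambda>l. f ` X l) {1..L}
          \<and> (\<forall>y. inv f y = (\<Sum>l\<in>{1..L}. of_bool (y \<in> f ` X l) *\<^sub>R
                                           (matrix_inv (\<Phi> l) *v (y - \<phi> l)))))
     \<and> (\<forall>(a :: real^'p) (\<tau> :: nat \<Rightarrow> ereal).
          a \<noteq> 0 \<longrightarrow> \<tau> 0 = - \<infinity> \<longrightarrow> \<tau> L = \<infinity> \<longrightarrow> (\<forall>l<L. \<tau> l < \<tau> (Suc l)) \<longrightarrow>
          (\<forall>l\<in>{1..L}. X l = {x. \<tau> (l - 1) < ereal (a \<bullet> x) \<and> ereal (a \<bullet> x) \<le> \<tau> l}) \<longrightarrow>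
          bij f \<longrightarrow>
          (\<forall>y. inv f y = (\<Sum>l\<in>{1..L}.
                 of_bool (nu_thr a \<tau> \<phi> \<Phi> (l - 1) < ereal ((a v* matrix_inv (\<Phi> 1)) \<bullet> y)
                          \<and> ereal ((a v* matrix_inv (\<Phi> 1)) \<bullet> y) \<le> nu_thr a \<tau> \<phi> \<Phi> l)
                 *\<^sub>R (matrix_inv (\<Phi> l) *v (y - \<phi> l)))))"
  proof -
  have L1: "1 \<le> L"
  proof (rule ccontr)
    assume "\<not> 1 \<le> L"
    then have "{1..L} = {}" by auto
    then show False using cover by auto
  qed
  have cov: "\<exists>l\<in>{1..L}. x \<in> X l" for x using cover by blast
  have dj: "l = k" if "l \<in> {1..L}" "k \<in> {1..L}" "x \<in> X l" "x \<in> X k" for l k x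
    using disj that unfolding disjoint_family_on_def by blast
  have fon: "f x = \<phi> l + \<Phi> l *v x" if l: "l \<in> {1..L}" "x \<in> X l" for l x
  proof -
    have nk: "x \<notin> X k" if "k \<in> {1..L}" "k \<noteq> l" for k
      using dj[OF l(1) that(1) l(2)] that(2) by blast
    have "f x = of_bool (x \<in> X l) *\<^sub>R (\<phi> l + \<Phi> l *v x)"
      unfolding f_def pw_affine_def by (rule sum_single) (use l nk in auto)
    then show ?thesis using l by simp
  qed
  have P1: "\<forall>x' x''. \<exists>\<Psi> \<in> convex hull (\<Phi> ` {1..L}). f x'' - f x' = \<Psi> *v (x'' - x')"
    using part1[OF finite_atLeastAtMost cont cov disj cvx fon] by (intro allI) assumption
  have P2: "bij f \<longrightarrow> (\<forall>l\<in>{1..L}. invertible (\<Phi> l)) \<longrightarrow>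
          (\<Union>l\<in>{1..L}. f ` X l) = UNIV
          \<and> disjoint_family_on (\<lambda>l. f ` X l) {1..L}
          \<and> (\<forall>y. inv f y = (\<Sum>l\<in>{1..L}. of_bool (y \<in> f ` X l) *\<^sub>R
                                           (matrix_inv (\<Phi> l) *v (y - \<phi> l))))"
  proof (intro impI conjI allI)
    assume bij: "bij f" and inv: "\<forall>l\<in>{1..L}. invertible (\<Phi> l)"
    have injf: "inj f" using bij bij_is_inj by blast
    have "(\<Union>l\<in>{1..L}. f ` X l) = f ` (\<Union>l\<in>{1..L}. X l)" by (simp add: image_UN)
    also have "\<dots> = UNIV" using cover bij by (simp add: bij_is_surj)
    finally show "(\<Union>l\<in>{1..L}. f ` X l) = UNIV" .
    show "disjoint_family_on (\<lambda>l. f ` X l) {1..L}"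
      unfolding disjoint_family_on_def
    proof (intro ballI impI)
      fix m n assume mn: "m \<in> {1..L}" "n \<in> {1..L}" "m \<noteq> n"
      show "f ` X m \<inter> f ` X n = {}"
      proof (rule ccontr)
        assume "f ` X m \<inter> f ` X n \<noteq> {}"
        then obtain u v where uv: "u \<in> X m" "v \<in> X n" "f u = f v" by blast
        then have "u = v" using injf by (simp add: inj_eq)
        then show False using dj[OF mn(1,2) uv(1)] uv(2) mn(3) by simp
      qed
    qed
    fix y
    define x where "x = inv f y"
    have fx: "f x = y" unfolding x_def using bij by (simp add: bij_is_surj surj_f_inv_f)
    obtain l0 where l0: "l0 \<in> {1..L}" "x \<in> X l0" using cov by blast
    have other: "y \<notin> f ` X k" if "k \<in> {1..L}" "k \<noteq> l0" for k
    proof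
      assume "y \<in> f ` X k"
      then obtain v where v: "v \<in> X k" "f v = y" by blast
      then have "v = x" using fx injf by (metis injD)
      then show False using dj[OF that(1) l0(1) v(1)] l0 that(2) by simp
    qed
    have "(\<Sum>l\<in>{1..L}. of_bool (y \<in> f ` X l) *\<^sub>R (matrix_inv (\<Phi> l) *v (y - \<phi> l)))
        = of_bool (y \<in> f ` X l0) *\<^sub>R (matrix_inv (\<Phi> l0) *v (y - \<phi> l0))"
      by (rule sum_single) (use l0 other in auto)
    also have "\<dots> = x"
    proof -
      have il: "invertible (\<Phi> l0)" using inv l0(1) by blast
      have "y \<in> f ` X l0" using fx l0(2) by blast
      moreover have "y = \<phi> l0 + \<Phi> l0 *v x" using fx fon[OF l0] by simp
      ultimately show ?thesis by (simp add: minv_vec[OF il])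
    qed
    finally show "inv f y = (\<Sum>l\<in>{1..L}. of_bool (y \<in> f ` X l) *\<^sub>R (matrix_inv (\<Phi> l) *v (y - \<phi> l)))"
      unfolding x_def ..
  qed
  have P3: "\<forall>(a :: real^'p) (\<tau> :: nat \<Rightarrow> ereal).
          a \<noteq> 0 \<longrightarrow> \<tau> 0 = - \<infinity> \<longrightarrow> \<tau> L = \<infinity> \<longrightarrow> (\<forall>l<L. \<tau> l < \<tau> (Suc l)) \<longrightarrow>
          (\<forall>l\<in>{1..L}. X l = {x. \<tau> (l - 1) < ereal (a \<bullet> x) \<and> ereal (a \<bullet> x) \<le> \<tau> l}) \<longrightarrow>
          bij f \<longrightarrow>
          (\<forall>y. inv f y = (\<Sum>l\<in>{1..L}.
                 of_bool (nu_thr a \<tau> \<phi> \<Phi> (l - 1) < ereal ((a v* matrix_inv (\<Phi> 1)) \<bullet> y)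
                          \<and> ereal ((a v* matrix_inv (\<Phi> 1)) \<bullet> y) \<le> nu_thr a \<tau> \<phi> \<Phi> l)
                 *\<^sub>R (matrix_inv (\<Phi> l) *v (y - \<phi> l))))"
  proof (intro allI impI)
    fix a :: "real^'p" and \<tau> :: "nat \<Rightarrow> ereal" and y
    assume h: "a \<noteq> 0" "\<tau> 0 = - \<infinity>" "\<tau> L = \<infinity>" "\<forall>l<L. \<tau> l < \<tau> (Suc l)"
      "\<forall>l\<in>{1..L}. X l = {x. \<tau> (l - 1) < ereal (a \<bullet> x) \<and> ereal (a \<bullet> x) \<le> \<tau> l}" "bij f"
    show "inv f y = (\<Sum>l\<in>{1..L}.
                 of_bool (nu_thr a \<tau> \<phi> \<Phi> (l - 1) < ereal ((a v* matrix_inv (\<Phi> 1)) \<bullet> y)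
                          \<and> ereal ((a v* matrix_inv (\<Phi> 1)) \<bullet> y) \<le> nu_thr a \<tau> \<phi> \<Phi> l)
                 *\<^sub>R (matrix_inv (\<Phi> l) *v (y - \<phi> l)))"
      by (rule part3[OF cont fon L1 h(1,2,3)]) (use h cov in auto)
  qed
  show ?thesis by (rule conjI[OF P1 conjI[OF P2 P3]])
qed

end
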